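(* Assume $\sigma_1(x)=\tfrac12\sigma_1''(0)(x-a_1)(x-b_1)$ and $\sigma_2(x)=\tfrac12\sigma_2''(0)(x-a_2)(x-b_2)$ with $\sigma_1''(0)\ne0$, $\sigma_2''(0)\ne0$ and real zeros satisfying $a_2<0<a_1<b_2<b_1$, and assume $q^2\Lambda_q<0$, where $\Lambda_q=q^{-2}\Big[1+\frac{(1-q^{-1})\tau'(0)}{\frac12\sigma_1''(0)}\Big]$. Put $a=b_2$ and $b=q^{-1}b_1$, and suppose $q^{-N-1}a=b$ for some $N\in\mathbb{N}_0$. Let $$\rho(x)=|x|^{\iota}\frac{(qa/x,\,x/b;q)_\infty}{(a_1/x,\,x/a_2;q)_\infty},\qquad q^{\iota}=\frac{q^{-3}\sigma_2''(0)a_2}{\sigma_1''(0)b}.$$ Then there exist polynomials $P_0,\dots,P_N$, with $P_n$ of degree $n$ a solution of the q-EHT with $\lambda=\lambda_n$, and nonzero constants $d_n^2$, such that for $m,n\in\{0,\dots,N\}$ $$\int_a^{b}P_n(x)P_m(x)\rho(x)\,d_{q^{-1}}x=d_n^2\delta_{mn},$$ i.e. the $P_n$ are orthogonal with respect to $\rho$ supported on $\{q^{-k}a\}_{k=0}^N$.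
   Context: Throughout $0<q<1$. For a function $y$ and $\zeta\in\{q,q^{-1}\}$, $D_\zeta y(x)=\frac{y(x)-y(\zeta x)}{(1-\zeta)x}$ for $x\ne0$ and $D_\zeta y(0)=y'(0)$; $[n]_q=\frac{1-q^n}{1-q}$. Let $\sigma_1$ be a real polynomial of degree at most two, $\tau(x)=\tau'(0)x+\tau(0)$ a real polynomial with $\tau'(0)\ne0$, and $\sigma_2(x):=q[\sigma_1(x)+(1-q^{-1})x\tau(x)]$. The q-EHT with parameter $n$ is $\sigma_1(x)D_{q^{-1}}D_qy(x)+\tau(x)D_qy(x)+\lambda_ny(x)=0$, $\lambda_n=-[n]_q\big(\tau'(0)+\tfrac12[n-1]_{q^{-1}}\sigma_1''(0)\big)$. $(\alpha;q)_\infty=\prod_{k\ge0}(1-\alpha q^k)$, $(\alpha_1,\dots,\alpha_r;q)_\infty=\prod_i(\alpha_i;q)_\infty$. For $q^{\iota}=c$ ($c\ne0$), $\iota$ is any complex number with $e^{\iota\ln q}=c$ and $|x|^{\iota}:=e^{\iota\ln|x|}$. For $a>0$ and $b=q^{-N-1}a$, $\int_a^{b}f(x)\,d_{q^{-1}}x=(q^{-1}-1)a\sum_{k=0}^{N}q^{-k}f(q^{-k}a)$. *)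

theory Defs
  imports "HOL-Analysis.Analysis" "HOL-Computational_Algebra.Polynomial"
begin

definition qD :: "real \<Rightarrow> (real \<Rightarrow> real) \<Rightarrow> real \<Rightarrow> real" where
  "qD \<zeta> y x = (if x = 0 then deriv y 0 else (y x - y (\<zeta> * x)) / ((1 - \<zeta>) * x))"

definition qnum :: "real \<Rightarrow> int \<Rightarrow> real" where
  "qnum q n = (1 - q powi n) / (1 - q)"

definition sigma2 :: "real \<Rightarrow> (real \<Rightarrow> real) \<Rightarrow> (real \<Rightarrow> real) \<Rightarrow> real \<Rightarrow> real" where
  "sigma2 q \<sigma>1 \<tau> x = q * (\<sigma>1 x + (1 - 1/q) * x * \<tau> x)"

definition lam :: "real \<Rightarrow> real \<Rightarrow> real \<Rightarrow> nat \<Rightarrow> real" where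
  "lam q dtau0 ddsig0 n = - qnum q (int n) * (dtau0 + 1/2 * qnum (1/q) (int n - 1) * ddsig0)"

definition qEHT :: "real \<Rightarrow> (real \<Rightarrow> real) \<Rightarrow> (real \<Rightarrow> real) \<Rightarrow> real \<Rightarrow> (real \<Rightarrow> real) \<Rightarrow> bool" where
  "qEHT q \<sigma>1 \<tau> lm y \<longleftrightarrow>
     (\<forall>x. \<sigma>1 x * qD (1/q) (qD q y) x + \<tau> x * qD q y x + lm * y x = 0)"

definition qpoch_inf :: "real \<Rightarrow> real \<Rightarrow> real" where
  "qpoch_inf \<alpha> q = (\<Prod>k. 1 - \<alpha> * q ^ k)"

definition rho :: "real \<Rightarrow> complex \<Rightarrow> real \<Rightarrow> real \<Rightarrow> real \<Rightarrow> real \<Rightarrow> real \<Rightarrow> complex" where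
  "rho q \<iota> a b a1 a2 x =
     exp (\<iota> * of_real (ln \<bar>x\<bar>)) *
     of_real (qpoch_inf (q * a / x) q * qpoch_inf (x / b) q /
              (qpoch_inf (a1 / x) q * qpoch_inf (x / a2) q))"

text \<open>Jackson integral from a to b = q^(-N-1) a:
  (q^-1 - 1) a sum_{k=0}^N q^-k f(q^-k a).\<close>
definition jackson_int :: "real \<Rightarrow> real \<Rightarrow> nat \<Rightarrow> (real \<Rightarrow> complex) \<Rightarrow> complex" where
  "jackson_int q a N f =
     of_real ((1/q - 1) * a) * (\<Sum>k\<le>N. of_real ((1/q) ^ k) * f ((1/q) ^ k * a))"

end

theory Submission
  imports Defs
begin


lemma qp_conv:
  fixes q \<alpha> :: real
  assumes "0 < q" "q < 1"
  shows "convergent_prod (\<lambda>k. 1 - \<alpha> * q ^ k)"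
proof -
  have "summable (\<lambda>k. norm ((1 - \<alpha> * q ^ k) - 1))"
    using assms by (simp add: abs_mult power_abs summable_geometric)
  thus ?thesis
    by (intro abs_convergent_prod_imp_convergent_prod summable_imp_abs_convergent_prod)
qed

lemma qp_shift:
  fixes q \<alpha> :: real
  assumes "0 < q" "q < 1" "\<alpha> \<noteq> 1"
  shows "qpoch_inf \<alpha> q = (1 - \<alpha>) * qpoch_inf (\<alpha> * q) q"
proof -
  have "(\<Prod>n. (\<lambda>k. 1 - \<alpha> * q ^ k) (Suc n)) = qpoch_inf \<alpha> q / (1 - \<alpha>)"
    unfolding qpoch_inf_def
    using prodinf_split_head[of "\<lambda>k. 1 - \<alpha> * q ^ k", OF qp_conv[OF assms(1,2)]] assms(3) by simp
  moreover have "(\<lambda>n. (\<lambda>k. 1 - \<alpha> * q ^ k) (Suc n)) = (\<lambda>k. 1 - (\<alpha> * q) * q ^ k)"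
    by (auto simp: algebra_simps)
  ultimately show ?thesis using assms(3) unfolding qpoch_inf_def by (simp add: field_simps)
qed

lemma qp_pos:
  fixes q \<alpha> :: real
  assumes "0 < q" "q < 1" "\<And>k. \<alpha> * q ^ k < 1"
  shows "qpoch_inf \<alpha> q > 0"
  unfolding qpoch_inf_def
  by (rule has_prod_pos[OF convergent_prod_has_prod[OF qp_conv[OF assms(1,2)]]])
     (use assms(3) in auto)




definition qs :: "real \<Rightarrow> nat \<Rightarrow> real" where "qs z n = (\<Sum>i<n. z ^ i)"

definition qd :: "real \<Rightarrow> real poly \<Rightarrow> real poly" where
  "qd z p = (\<Sum>j\<le>degree p. monom (coeff p j * qs z j) (j - 1))"

lemma qs_0[simp]: "qs z 0 = 0" by (simp add: qs_def)

lemma qs_alt: "z \<noteq> 1 \<Longrightarrow> qs z n = (1 - z ^ n) / (1 - z)"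
  by (simp add: qs_def sum_gp_strict)

lemma poly_qd:
  assumes "x \<noteq> 0" "z \<noteq> 1"
  shows "poly (qd z p) x = (poly p x - poly p (z * x)) / ((1 - z) * x)"
proof -
  have "poly (qd z p) x = (\<Sum>j\<le>degree p. coeff p j * qs z j * x ^ (j - 1))"
    by (simp add: qd_def poly_sum poly_monom)
  also have "\<dots> = (\<Sum>j\<le>degree p. coeff p j * (x ^ j - (z * x) ^ j) / ((1 - z) * x))"
  proof (rule sum.cong[OF refl])
    fix j show "coeff p j * qs z j * x ^ (j - 1) = coeff p j * (x ^ j - (z * x) ^ j) / ((1 - z) * x)"
    proof (cases j)
      case 0 then show ?thesis by simp
    next
      case (Suc m)
      have "1 - z \<noteq> 0" using assms by simp
      then show ?thesis using assms Suc
        by (simp add: qs_alt field_simps power_mult_distrib)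
    qed
  qed
  also have "\<dots> = (poly p x - poly p (z * x)) / ((1 - z) * x)"
    by (simp add: poly_altdef sum_divide_distrib sum_subtractf[symmetric] algebra_simps)
  finally show ?thesis .
qed

lemma poly_qd0: "poly (qd z p) 0 = coeff p 1"
proof -
  have "poly (qd z p) 0 = (\<Sum>j\<le>degree p. coeff p j * qs z j * 0 ^ (j - 1))"
    by (simp add: qd_def poly_sum poly_monom)
  also have "\<dots> = (\<Sum>j\<le>degree p. if j = 1 then coeff p 1 else 0)"
  proof (rule sum.cong[OF refl])
    fix j show "coeff p j * qs z j * 0 ^ (j - 1) = (if j = 1 then coeff p 1 else 0)"
      by (cases j) (auto simp: qs_def)
  qed
  also have "\<dots> = coeff p 1"
    by (cases "degree p") (auto simp: coeff_eq_0)
  finally show ?thesis .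
qed

lemma qD_poly:
  assumes "z \<noteq> 1"
  shows "qD z (poly p) = poly (qd z p)"
proof
  fix x show "qD z (poly p) x = poly (qd z p) x"
  proof (cases "x = 0")
    case True
    have "deriv (poly p) 0 = poly (pderiv p) 0"
      by (rule DERIV_imp_deriv) (rule poly_DERIV)
    also have "\<dots> = coeff p 1" by (simp add: poly_0_coeff_0 coeff_pderiv)
    finally show ?thesis using True by (simp add: qD_def poly_qd0)
  qed (simp add: qD_def poly_qd assms)
qed

lemma poly_eq_nonzero:
  fixes p r :: "real poly"
  assumes "\<And>x. x \<noteq> 0 \<Longrightarrow> poly p x = poly r x"
  shows "p = r"
proof (rule ccontr)
  assume "p \<noteq> r"
  then have "p - r \<noteq> 0" by simp
  then have "finite {x. poly (p - r) x = 0}" by (rule poly_roots_finite)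
  moreover have "UNIV - {0::real} \<subseteq> {x. poly (p - r) x = 0}" using assms by auto
  moreover have "infinite (UNIV - {0::real})"
    by (simp add: infinite_UNIV_char_0)
  ultimately show False using finite_subset by blast
qed

lemma qd_add: "z \<noteq> 1 \<Longrightarrow> qd z (p + r) = qd z p + qd z r"
proof (rule poly_eq_nonzero)
  fix x :: real assume "x \<noteq> 0" "z \<noteq> 1"
  show "poly (qd z (p + r)) x = poly (qd z p + qd z r) x"
    unfolding poly_add poly_qd[OF \<open>x \<noteq> 0\<close> \<open>z \<noteq> 1\<close>] add_divide_distrib[symmetric]
    by (rule arg_cong[where f="\<lambda>u. u / ((1 - z) * x)"]) simp
qed
lemma qd_smult: "z \<noteq> 1 \<Longrightarrow> qd z (smult c p) = smult c (qd z p)"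
  by (rule poly_eq_nonzero) (simp add: poly_qd algebra_simps)
lemma qd_monom: "z \<noteq> 1 \<Longrightarrow> qd z (monom c n) = monom (c * qs z n) (n - 1)"
proof (rule poly_eq_nonzero)
  fix x :: real assume x: "x \<noteq> 0" and z: "z \<noteq> 1"
  show "poly (qd z (monom c n)) x = poly (monom (c * qs z n) (n - 1)) x"
  proof (cases n)
    case (Suc m)
    have "1 - z \<noteq> 0" using z by simp
    then show ?thesis using x z Suc
      by (simp add: poly_qd poly_monom qs_alt field_simps power_mult_distrib)
  qed (simp add: poly_qd x z poly_monom)
qed

definition Lop :: "real \<Rightarrow> real poly \<Rightarrow> real poly \<Rightarrow> real poly \<Rightarrow> real poly" where
  "Lop q S T p = S * qd (1/q) (qd q p) + T * qd q p"

lemma Lop_add: "0 < q \<Longrightarrow> q < 1 \<Longrightarrow> Lop q S T (p + r) = Lop q S T p + Lop q S T r"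
  by (simp add: Lop_def qd_add algebra_simps)
lemma Lop_smult: "0 < q \<Longrightarrow> q < 1 \<Longrightarrow> Lop q S T (smult c p) = smult c (Lop q S T p)"
  by (simp add: Lop_def qd_smult smult_add_right)

lemma eigen_aux:
  fixes Lf :: "real poly \<Rightarrow> real poly" and \<mu> :: "nat \<Rightarrow> real"
  assumes add: "\<And>p r. Lf (p + r) = Lf p + Lf r"
    and sm: "\<And>c p. Lf (smult c p) = smult c (Lf p)"
    and cmu: "\<And>j. coeff (Lf (monom 1 j)) j = \<mu> j"
    and chi: "\<And>j i. j < i \<Longrightarrow> coeff (Lf (monom 1 j)) i = 0"
  shows "(\<forall>i\<ge>n. coeff f i = 0) \<Longrightarrow> (\<forall>j<n. \<mu> j \<noteq> m) \<Longrightarrow>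
     \<exists>r. (\<forall>i\<ge>n. coeff r i = 0) \<and> Lf r - smult m r = f"
proof (induction n arbitrary: f)
  case 0
  then have "f = 0" by (intro poly_eqI) auto
  moreover have "Lf 0 = 0" using sm[of 0 0] by simp
  ultimately show ?case by (intro exI[of _ 0]) auto
next
  case (Suc n)
  define c where "c = coeff f n / (\<mu> n - m)"
  have ne: "\<mu> n - m \<noteq> 0" using Suc.prems(2) by auto
  define r0 where "r0 = smult c (monom 1 n)"
  have Mr0: "Lf r0 - smult m r0 = smult c (Lf (monom 1 n) - smult m (monom 1 n))"
    by (simp add: r0_def sm smult_diff_right mult.commute)
  define f' where "f' = f - (Lf r0 - smult m r0)"
  have f': "\<forall>i\<ge>n. coeff f' i = 0"
  proof (intro allI impI)
    fix i assume "n \<le> i"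
    show "coeff f' i = 0"
    proof (cases "i = n")
      case True then show ?thesis using ne
        by (simp add: f'_def Mr0 cmu c_def coeff_monom)
    next
      case False
      then have "n < i" using \<open>n \<le> i\<close> by simp
      then show ?thesis using Suc.prems(1)
        by (simp add: f'_def Mr0 chi coeff_monom)
    qed
  qed
  from Suc.IH[OF f'] Suc.prems(2) obtain r1 where
    r1: "\<forall>i\<ge>n. coeff r1 i = 0" "Lf r1 - smult m r1 = f'" by auto
  have "Lf (r0 + r1) - smult m (r0 + r1) = (Lf r0 - smult m r0) + (Lf r1 - smult m r1)"
    by (simp add: add algebra_simps smult_add_right)
  also have "\<dots> = f" using r1(2) by (simp add: f'_def)
  finally show ?case
    using r1(1) by (intro exI[of _ "r0 + r1"]) (auto simp: r0_def coeff_monom)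
qed

lemma eigen_exists:
  fixes Lf :: "real poly \<Rightarrow> real poly" and \<mu> :: "nat \<Rightarrow> real"
  assumes add: "\<And>p r. Lf (p + r) = Lf p + Lf r"
    and sm: "\<And>c p. Lf (smult c p) = smult c (Lf p)"
    and cmu: "\<And>j. coeff (Lf (monom 1 j)) j = \<mu> j"
    and chi: "\<And>j i. j < i \<Longrightarrow> coeff (Lf (monom 1 j)) i = 0"
    and dist: "\<And>j. j < n \<Longrightarrow> \<mu> j \<noteq> \<mu> n"
  shows "\<exists>P. degree P = n \<and> coeff P n = 1 \<and> Lf P = smult (\<mu> n) P"
proof -
  define f where "f = - (Lf (monom 1 n) - smult (\<mu> n) (monom 1 n))"
  have "\<forall>i\<ge>n. coeff f i = 0"
  proof (intro allI impI)
    fix i assume "n \<le> i"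
    then show "coeff f i = 0"
      by (cases "i = n") (auto simp: f_def cmu chi coeff_monom)
  qed
  from eigen_aux[OF add sm cmu chi this] dist obtain r where
    r: "\<forall>i\<ge>n. coeff r i = 0" "Lf r - smult (\<mu> n) r = f" by blast
  define P where "P = monom 1 n + r"
  have "Lf P - smult (\<mu> n) P = 0"
    using r(2) by (simp add: P_def add f_def algebra_simps smult_add_right)
  hence "Lf P = smult (\<mu> n) P" by simp
  moreover have "degree P = n"
  proof (rule antisym)
    show "degree P \<le> n" by (rule degree_le) (use r(1) in \<open>auto simp: P_def coeff_monom\<close>)
    show "n \<le> degree P" by (rule le_degree) (use r(1) in \<open>auto simp: P_def coeff_monom\<close>)
  qed
  moreover have "coeff P n = 1" using r(1) by (simp add: P_def)
  ultimately show ?thesis by blast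
qed

lemma Lop_monom_coeff_gen:
  assumes q: "0 < q" "q < 1"
  shows "coeff (Lop q [:e0, e1, s1:] [:t0, t1:] (monom 1 n)) (n + k) =
     (if k = 0 then qs q n * (t1 + s1 * qs (1/q) (n - 1)) else 0)"
proof -
  have z: "q \<noteq> 1" "1/q \<noteq> 1" using q by auto
  have L: "Lop q [:e0, e1, s1:] [:t0, t1:] (monom 1 n) =
     monom (qs q n * qs (1/q) (n - 1)) (n - Suc (Suc 0)) * [:e0, e1, s1:] + monom (qs q n) (n - 1) * [:t0, t1:]"
    by (simp add: Lop_def qd_monom z mult.commute)
  show ?thesis
  proof (cases n)
    case 0 then show ?thesis unfolding L by simp
  next
    case (Suc m)
    show ?thesis
    proof (cases m)
      case 0
      have "coeff (monom (qs q n) (n - 1) * [:t0, t1:]) (n + k) = (if k = 0 then qs q n * t1 else 0)"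
        using Suc 0 by (cases k) (simp_all add: coeff_monom_mult)
      then show ?thesis using Suc 0 unfolding L by (simp add: qs_def)
    next
      case (Suc j)
      have nn: "n = Suc (Suc j)" using \<open>n = Suc m\<close> Suc by simp
      have A: "coeff (monom (qs q n * qs (1/q) (n - 1)) (n - Suc (Suc 0)) * [:e0, e1, s1:]) (n + k)
          = (if k = 0 then qs q n * qs (1/q) (n - 1) * s1 else 0)"
      proof -
        have "n - Suc (Suc 0) = j" "n + k - j = Suc (Suc k)" using nn by auto
        then show ?thesis using nn by (cases k) (simp_all add: coeff_monom_mult)
      qed
      have B: "coeff (monom (qs q n) (n - 1) * [:t0, t1:]) (n + k) = (if k = 0 then qs q n * t1 else 0)"
      proof -
        have "n - 1 = Suc j" "n + k - Suc j = Suc k" using nn by auto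
        then show ?thesis using nn by (cases k) (simp_all add: coeff_monom_mult)
      qed
      show ?thesis unfolding L coeff_add A B by (simp add: algebra_simps)
    qed
  qed
qed




lemma qp_pos':
  fixes q \<alpha> :: real
  assumes "0 < q" "q < 1" "\<alpha> < 1"
  shows "qpoch_inf \<alpha> q > 0"
proof (rule qp_pos[OF assms(1,2)])
  fix k
  have "q ^ k \<le> 1" "0 \<le> q ^ k" using assms by (auto simp: power_le_one)
  show "\<alpha> * q ^ k < 1"
  proof (cases "\<alpha> \<le> 0")
    case True then show ?thesis using \<open>0 \<le> q ^ k\<close> by (smt (verit) mult_nonpos_nonneg)
  next
    case False then show ?thesis using \<open>q ^ k \<le> 1\<close> assms(3)
      by (smt (verit) mult_left_le mult_nonneg_nonneg)
  qed
qed

lemma sym_sum: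
  fixes W A B u v :: "nat \<Rightarrow> real"
  assumes B0: "B 0 = 0" and bal: "\<And>k. k < N \<Longrightarrow> W k * A k = W (Suc k) * B (Suc k)"
  shows "(\<Sum>k\<le>N. W k * (A k * (u (Suc k) - u k) + B k * (u (k - 1) - u k)) * v k) =
     - (\<Sum>k<N. W k * A k * (u (Suc k) - u k) * (v (Suc k) - v k)) + W N * A N * (u (Suc N) - u N) * v N"
  using bal
proof (induction N)
  case 0 then show ?case by (simp add: B0)
next
  case (Suc N)
  have b: "W N * A N = W (Suc N) * B (Suc N)" using Suc.prems by simp
  have IH: "(\<Sum>k\<le>N. W k * (A k * (u (Suc k) - u k) + B k * (u (k - 1) - u k)) * v k) =
     - (\<Sum>k<N. W k * A k * (u (Suc k) - u k) * (v (Suc k) - v k)) + W N * A N * (u (Suc N) - u N) * v N"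
    using Suc.prems by (intro Suc.IH) auto
  show ?case
    unfolding sum.atMost_Suc sum.lessThan_Suc IH
    using b by (simp add: algebra_simps)
qed

lemma shift_form:
  fixes q x s t f0 fp fq fpq :: real
  assumes "0 < q" "q < 1" "x \<noteq> 0"
  shows "s * ((f0 - fq) / ((1 - q) * x) - (fp - f0) / ((1 - q) * (1/q * x))) / ((1 - 1/q) * x)
           + t * ((f0 - fq) / ((1 - q) * x))
         = (q^2 * s * (fp - f0) + (q * (s + (1 - 1/q) * x * t)) * (fq - f0)) / ((1 - q)^2 * x^2)"
proof -
  have nz: "1 - q \<noteq> 0" "q \<noteq> 0" "1 - 1/q \<noteq> 0" using assms by auto
  have e1: "(fp - f0) / ((1 - q) * (1/q * x)) = q*(fp-f0)/((1-q)*x)"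
    using nz assms(3) by (simp add: field_simps)
  have e2: "\<And>z. z / ((1 - 1/q) * x) = -q * z /((1-q)*x)"
    using nz assms(3) by (simp add: field_simps)
  have "s * ((f0 - fq) / ((1 - q) * x) - (fp - f0) / ((1 - q) * (1/q * x))) / ((1 - 1/q) * x)
           + t * ((f0 - fq) / ((1 - q) * x))
       = (-q * s * ((f0 - fq) - q * (fp - f0)) + t * (f0 - fq) * ((1 - q) * x)) / ((1 - q)^2 * x^2)"
  proof -
    have D: "(1 - q) * x \<noteq> 0" using nz assms(3) by simp
    have gen: "\<And>D a b. D \<noteq> 0 \<Longrightarrow> -q * (s * (a / D - q * b / D)) / D + t * (a / D) =
        (-q * s * (a - q * b) + t * a * D) / (D * D)"
      by (simp add: field_simps)
    have "(1 - q)^2 * x^2 = ((1 - q) * x) * ((1 - q) * x)" by (simp add: power2_eq_square)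
    then show ?thesis unfolding e1 e2 using gen[OF D, of "f0 - fq" "fp - f0"] by simp
  qed
  also have "\<dots> = (q^2 * s * (fp - f0) + (q * (s + (1 - 1/q) * x * t)) * (fq - f0)) / ((1 - q)^2 * x^2)"
  proof -
    have "-q * s * ((f0 - fq) - q * (fp - f0)) + t * (f0 - fq) * ((1 - q) * x)
        = q^2 * s * (fp - f0) + (q * (s + (1 - 1/q) * x * t)) * (fq - f0)"
      using nz by (simp add: field_simps power2_eq_square)
    then show ?thesis by simp
  qed
  finally show ?thesis .
qed

lemma c_simp:
  fixes q s1 s2 a2 b1 :: real
  assumes "0 < q" "s1 \<noteq> 0" "b1 \<noteq> 0"
  shows "q powi (-3) * (2 * s2) * a2 / ((2 * s1)*(b1/q)) = s2 * a2 / (q^2 * s1 * b1)"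
proof -
  have "q powi (-3) = 1 / q^3" by (simp add: power_int_minus divide_inverse)
  then show ?thesis using assms by (simp add: field_simps power2_eq_square power3_eq_cube)
qed

lemma bal_alg:
  fixes q s1 s2 a1 a2 b1 b2 x Q1 Q2 Q3 Q4 :: real
  assumes "0 < q" "q < 1" "s1 \<noteq> 0" "b1 \<noteq> 0" "x \<noteq> 0" "x \<noteq> a1" "1 - (1/q*x)/a2 \<noteq> 0"
    "Q3 \<noteq> 0" "Q4 \<noteq> 0" and a2: "a2 \<noteq> 0"
  shows "s2 * a2 / (q^2 * s1 * b1) * ((1 - q*b2/x) * Q1 * Q2 / ((1 - a1/x) * Q3 * Q4)) * (s1*(x-a1)*(x-b1))
     = (1/q) * (Q1 * ((1 - (1/q*x)/(b1/q)) * Q2) / (Q3 * ((1 - (1/q*x)/a2) * Q4))) * (s2*(1/q*x - a2)*(1/q*x - b2))"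
proof -
  have xa2: "x - q * a2 \<noteq> 0" using assms(7) assms(1) a2 by (auto simp: field_simps)
  have l: "(1 - a1/x) = (x - a1)/x" "(1 - q*b2/x) = (x - q*b2)/x" using assms(5) by (auto simp: field_simps)
  have r: "1 - (1/q*x)/(b1/q) = (b1 - x)/b1" "1 - (1/q*x)/a2 = (q*a2 - x)/(q*a2)"
    "1/q*x - a2 = (x - q*a2)/q" "1/q*x - b2 = (x - q*b2)/q" using assms(1,4) a2 by (auto simp: field_simps)
  have xa1: "x - a1 \<noteq> 0" using assms(6) by simp
  show ?thesis unfolding l r using assms(1,3,4,5,8,9) a2 xa1 xa2
    by (simp add: field_simps power2_eq_square)
qed

lemma rr_balance:
  fixes q s1 s2 a1 a2 b1 b2 x :: real
  assumes q: "0 < q" "q < 1" and z: "a2 < 0" "0 < a1" "a1 < b2" "b2 < b1" and s1: "s1 \<noteq> 0"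
    and x: "b2 \<le> x" "x \<le> q * b1"
  shows "s2 * a2 / (q^2 * s1 * b1) *
     (qpoch_inf (q*b2/x) q * qpoch_inf (x/(b1/q)) q / (qpoch_inf (a1/x) q * qpoch_inf (x/a2) q))
       * (s1*(x-a1)*(x-b1))
   = (1/q) * (qpoch_inf (q*b2/(1/q*x)) q * qpoch_inf ((1/q*x)/(b1/q)) q /
        (qpoch_inf (a1/(1/q*x)) q * qpoch_inf ((1/q*x)/a2) q))
       * (s2*(1/q*x - a2)*(1/q*x - b2))"
proof -
  have x0: "x > 0" using x z by linarith
  have b1: "b1 > 0" using z by linarith
  have h1: "qpoch_inf (q*b2/x) q = (1 - q*b2/x) * qpoch_inf (q*b2/(1/q*x)) q"
  proof -
    have "q*b2 < 1*b2" using q z by (intro mult_strict_right_mono) auto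
    then have "q*b2 < x" using x by simp
    then have "q*b2/x < 1" using x0 by (simp add: divide_less_eq_1_pos)
    then have "q*b2/x \<noteq> 1" by linarith
    moreover have "q*b2/x*q = q*b2/(1/q*x)" using q by simp
    ultimately show ?thesis using qp_shift[OF q, of "q*b2/x"] by simp
  qed
  have h2: "qpoch_inf ((1/q*x)/(b1/q)) q = (1 - (1/q*x)/(b1/q)) * qpoch_inf (x/(b1/q)) q"
  proof -
    have "q*b1 < 1*b1" using q b1 by (intro mult_strict_right_mono) auto
    then have "x < 1*b1" using x by linarith
    then have "x/b1 < 1" using b1 by (simp add: divide_less_eq_1_pos)
    then have "x/b1 \<noteq> 1" by linarith
    moreover have "(1/q*x)/(b1/q) = x/b1" using q by simp
    moreover have "x/b1*q = x/(b1/q)" using q by simp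
    ultimately show ?thesis using qp_shift[OF q, of "x/b1"] by simp
  qed
  have h3: "qpoch_inf (a1/x) q = (1 - a1/x) * qpoch_inf (a1/(1/q*x)) q"
  proof -
    have "a1 < x" using x z by linarith
    then have "a1/x < 1" using x0 by (simp add: divide_less_eq_1_pos)
    then have "a1/x \<noteq> 1" by linarith
    moreover have "a1/x*q = a1/(1/q*x)" using q by simp
    ultimately show ?thesis using qp_shift[OF q, of "a1/x"] by simp
  qed
  have h4: "qpoch_inf ((1/q*x)/a2) q = (1 - (1/q*x)/a2) * qpoch_inf (x/a2) q"
  proof -
    have "(1/q*x)/a2 < 0" using x0 q z by (intro divide_pos_neg) auto
    then have "(1/q*x)/a2 \<noteq> 1" by linarith
    moreover have "(1/q*x)/a2*q = x/a2" using q by simp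
    ultimately show ?thesis using qp_shift[OF q, of "(1/q*x)/a2"] by simp
  qed
  have Q3: "qpoch_inf (a1/(1/q*x)) q \<noteq> 0"
  proof -
    have "q*a1 < 1*a1" using q z by (intro mult_strict_right_mono) auto
    then have "q*a1 < 1*x" using x z by linarith
    then have "q*a1/x < 1" using x0 by (simp add: divide_less_eq_1_pos)
    then have pos: "qpoch_inf (q*a1/x) q > 0" by (rule qp_pos'[OF q])
    have eq: "a1/(1/q*x) = q*a1/x" by simp
    show ?thesis unfolding eq using pos by linarith
  qed
  have Q4: "qpoch_inf (x/a2) q \<noteq> 0"
  proof -
    have "x/a2 < 0" using x0 z by (simp add: divide_pos_neg)
    then have "x/a2 < 1" by linarith
    then show ?thesis using qp_pos'[OF q, of "x/a2"] by simp
  qed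
  have ne: "1 - (1/q*x)/a2 \<noteq> 0"
  proof -
    have "(1/q*x)/a2 < 0" using x0 q z by (intro divide_pos_neg) auto
    then show ?thesis by linarith
  qed
  show ?thesis unfolding h1 h2 h3 h4
    by (rule bal_alg[OF q s1 _ _ _ ne Q3 Q4]) (use x0 x z in auto)
qed




lemma h_mono:
  fixes q p r :: real
  assumes "0 < q" "0 < p" "0 < r"
  shows "strict_mono (\<lambda>n. qs q n * (r + qs p (n - 1)))"
  unfolding strict_mono_Suc_iff
proof
  fix n
  show "qs q n * (r + qs p (n - 1)) < qs q (Suc n) * (r + qs p (Suc n - 1))"
  proof (cases n)
    case 0 then show ?thesis using assms by (simp add: qs_def)
  next
    case (Suc m)
    have a: "qs q (Suc m) < qs q (Suc (Suc m))" using assms by (simp add: qs_def)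
    have b: "r + qs p m \<le> r + qs p (Suc m)" using assms by (simp add: qs_def)
    have c: "0 \<le> qs q (Suc m)" using assms by (simp add: qs_def sum_nonneg)
    have d: "0 < r + qs p m" using assms by (simp add: qs_def add_pos_nonneg sum_nonneg)
    show ?thesis using mult_less_le_imp_less[OF a b c d] Suc by simp
  qed
qed

lemma wbal:
  fixes q c x r0 s0 r1 s1 m :: real
  assumes "c \<noteq> 0" "q \<noteq> 0" "x \<noteq> 0" "m \<noteq> 0" and h: "c * r0 * s0 = (1/q) * r1 * s1"
  shows "(1/q)^k * r0 / c^k * (q^2 * s0 / (m * x^2))
       = (1/q)^(Suc k) * r1 / c^(Suc k) * (s1 / (m * (1/q * x)^2))"
proof -
  have h': "r1 * s1 = q * c * r0 * s0" using h assms(2) by (simp add: field_simps)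
  have "(1/q)^(Suc k) * r1 / c^(Suc k) * (s1 / (m * (1/q * x)^2))
      = (1/q)^k * (r1 * s1) * q / (c^k * c * m * x^2)"
    using assms by (simp add: field_simps power2_eq_square)
  also have "\<dots> = (1/q)^k * r0 / c^k * (q^2 * s0 / (m * x^2))"
    unfolding h' using assms by (simp add: field_simps power2_eq_square)
  finally show ?thesis by simp
qed

lemma shift_poly:
  fixes q y :: real and S T P :: "real poly"
  assumes "0 < q" "q < 1" "y \<noteq> 0"
  shows "poly (Lop q S T P) y = (q^2 * poly S y * (poly P (1/q*y) - poly P y)
     + (q * (poly S y + (1 - 1/q) * y * poly T y)) * (poly P (q*y) - poly P y)) / ((1 - q)^2 * y^2)"
proof -
  have ne: "q \<noteq> 1" "1/q \<noteq> 1" "1/q*y \<noteq> 0" using assms by auto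
  have qq: "q * (1/q*y) = y" using assms by simp
  have "poly (Lop q S T P) y = poly S y * ((((poly P y - poly P (q*y)) / ((1 - q) * y))
      - (poly P (1/q*y) - poly P y) / ((1 - q) * (1/q*y))) / ((1 - 1/q) * y))
      + poly T y * ((poly P y - poly P (q*y)) / ((1 - q) * y))"
    unfolding Lop_def poly_add poly_mult poly_qd[OF assms(3) ne(2)] poly_qd[OF assms(3) ne(1)]
      poly_qd[OF ne(3) ne(1)] qq ..
  also have "\<dots> = (q^2 * poly S y * (poly P (1/q*y) - poly P y)
     + (q * (poly S y + (1 - 1/q) * y * poly T y)) * (poly P (q*y) - poly P y)) / ((1 - q)^2 * y^2)"
    using shift_form[OF assms, of "poly S y" "poly P y" "poly P (q*y)" "poly P (1/q*y)" "poly T y"]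
    by simp
  finally show ?thesis .
qed



theorem theorem4p8:
  fixes q s1 a1 b1 t1 t0 s2 a2 b2 :: real
    and \<sigma>1 \<tau> :: "real \<Rightarrow> real"
    and N :: nat and \<iota> :: complex
  assumes q0: "0 < q" and q1: "q < 1"
    and sig1: "\<sigma>1 = (\<lambda>x. (1/2) * (2 * s1) * (x - a1) * (x - b1))" and s1: "s1 \<noteq> 0"
    and tau: "\<tau> = (\<lambda>x. t1 * x + t0)" and t1: "t1 \<noteq> 0"
    and sig2: "sigma2 q \<sigma>1 \<tau> = (\<lambda>x. (1/2) * (2 * s2) * (x - a2) * (x - b2))" and s2: "s2 \<noteq> 0"
    and zeros: "a2 < 0" "0 < a1" "a1 < b2" "b2 < b1"
    and Lam: "q^2 * (q powi (-2) * (1 + (1 - 1/q) * t1 / ((1/2) * (2 * s1)))) < 0"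
    and N: "q powi (- int N - 1) * b2 = b1 / q"
    and iota: "exp (\<iota> * of_real (ln q)) =
                 of_real (q powi (-3) * (2 * s2) * a2 / ((2 * s1) * (b1 / q)))"
  shows "\<exists>P :: nat \<Rightarrow> real poly. \<exists>d :: nat \<Rightarrow> complex.
           (\<forall>n\<le>N. degree (P n) = n \<and> qEHT q \<sigma>1 \<tau> (lam q t1 (2 * s1) n) (poly (P n)) \<and> d n \<noteq> 0) \<and>
           (\<forall>m\<le>N. \<forall>n\<le>N.
              jackson_int q b2 N
                (\<lambda>x. of_real (poly (P n) x * poly (P m) x) * rho q \<iota> b2 (b1 / q) a1 a2 x)
              = (if m = n then d n else 0))"
proof -
  have qne: "q \<noteq> 1" "1/q \<noteq> 1" using q0 q1 by auto
  have p1: "1 < 1/q" using q0 q1 by simp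
  have b1: "0 < b1" "0 < b2" using zeros by linarith+
  define S where "S = [:s1*a1*b1, -(s1*(a1+b1)), s1:]"
  define T where "T = [:t0, t1:]"
  have polyS: "\<And>y. poly S y = \<sigma>1 y" by (simp add: S_def sig1 algebra_simps)
  have polyT: "\<And>y. poly T y = \<tau> y" by (simp add: T_def tau algebra_simps)
  have sig1': "\<And>y. \<sigma>1 y = s1 * (y - a1) * (y - b1)" by (simp add: sig1)
  have sig2': "\<And>y. sigma2 q \<sigma>1 \<tau> y = s2 * (y - a2) * (y - b2)" by (simp add: sig2)
  define \<mu> where "\<mu> n = qs q n * (t1 + s1 * qs (1/q) (n - 1))" for n
  have mu_lam: "lam q t1 (2 * s1) n = - \<mu> n" for n
  proof (cases n)
    case 0 then show ?thesis by (simp add: lam_def \<mu>_def qnum_def)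
  next
    case (Suc m)
    have a: "qnum q (int n) = qs q n" using qne by (simp add: qnum_def qs_alt)
    have b: "int n - 1 = int m" using Suc by simp
    have c: "qnum (1/q) (int m) = qs (1/q) m" using qne by (simp add: qnum_def qs_alt)
    have "qnum q (int n) = qs q n" "qnum (1/q) (int n - 1) = qs (1/q) m"
      using a b c by simp_all
    then show ?thesis using Suc by (simp add: lam_def \<mu>_def)
  qed
  have lead: "s2 = q * (s1 + (1 - 1/q) * t1)"
  proof -
    have "sigma2 q \<sigma>1 \<tau> 1 + sigma2 q \<sigma>1 \<tau> (-1) - 2 * sigma2 q \<sigma>1 \<tau> 0 = 2 * s2"
      by (simp add: sig2' algebra_simps)
    moreover have "sigma2 q \<sigma>1 \<tau> 1 + sigma2 q \<sigma>1 \<tau> (-1) - 2 * sigma2 q \<sigma>1 \<tau> 0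
        = 2 * (q * (s1 + (1 - 1/q) * t1))"
      using q0 by (simp add: sigma2_def sig1' tau field_simps)
    ultimately show ?thesis by simp
  qed
  define X where "X = 1 + (1 - 1/q) * t1 / s1"
  have X: "X < 0"
  proof -
    have "q powi (-2) = 1 / q^2" by (simp add: power_int_minus divide_inverse)
    then show ?thesis using Lam q0 by (simp add: X_def)
  qed
  have r0: "t1 / s1 > 0"
  proof -
    have neg: "(1 - 1/q) * (t1 / s1) < 0" using X unfolding X_def times_divide_eq_right by linarith
    have "1 - 1/q < 0" using p1 by simp
    then show ?thesis using neg mult_less_0_iff[of "1-1/q" "t1/s1"] by linarith
  qed
  have qq: "q * (1 - 1/q) = q - 1" using q0 by (simp add: field_simps)
  have l2: "s2 = q * s1 + (q - 1) * t1" unfolding lead qq[symmetric] by (simp only: distrib_left mult.assoc)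
  have l3: "q * s1 * X = q * s1 + (q - 1) * t1" using s1 q0 by (simp add: X_def field_simps)
  have s2X: "s2 = q * s1 * X" using l2 l3 by simp
  have s12: "s1 * s2 < 0"
  proof -
    have e: "s1 * s2 = q * (s1 * s1) * X" using s2X by simp
    have "s1 * s1 > 0" using s1 by (cases "s1 > 0") (auto intro: mult_pos_pos mult_neg_neg)
    then have pos: "q * (s1 * s1) > 0" using q0 by simp
    show ?thesis unfolding e using mult_pos_neg[OF pos X] .
  qed
  have mu_h: "\<mu> n = s1 * (qs q n * (t1/s1 + qs (1/q) (n - 1)))" for n
    using s1 by (simp add: \<mu>_def field_simps)
  have hm: "strict_mono (\<lambda>n. qs q n * (t1/s1 + qs (1/q) (n - 1)))"
    by (rule h_mono) (use q0 r0 in auto)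
  have dist: "\<mu> j \<noteq> \<mu> n" if "j \<noteq> n" for j n
  proof -
    have "qs q j * (t1/s1 + qs (1/q) (j - 1)) \<noteq> qs q n * (t1/s1 + qs (1/q) (n - 1))"
      using strict_mono_eq[OF hm, of j n] that by simp
    then show ?thesis using s1 by (simp add: mu_h)
  qed
  have "\<forall>n. \<exists>P. degree P = n \<and> coeff P n = 1 \<and> Lop q S T P = smult (\<mu> n) P"
  proof
    fix n
    show "\<exists>P. degree P = n \<and> coeff P n = 1 \<and> Lop q S T P = smult (\<mu> n) P"
    proof (rule eigen_exists)
      show "Lop q S T (p + r) = Lop q S T p + Lop q S T r" for p r using Lop_add q0 q1 by blast
      show "Lop q S T (smult c p) = smult c (Lop q S T p)" for c p using Lop_smult q0 q1 by blast
      show "coeff (Lop q S T (monom 1 j)) j = \<mu> j" for j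
        using Lop_monom_coeff_gen[OF q0 q1, of _ _ s1 t0 t1 j 0] by (simp add: S_def T_def \<mu>_def)
      show "coeff (Lop q S T (monom 1 j)) i = 0" if "j < i" for j i
      proof -
        obtain k where "i = j + k" "k \<noteq> 0" using \<open>j < i\<close> by (metis add_diff_inverse_nat less_imp_le_nat not_less nat_diff_split add.right_neutral less_irrefl)
        then show ?thesis
          using Lop_monom_coeff_gen[OF q0 q1, of _ _ s1 t0 t1 j k] by (simp add: S_def T_def)
      qed
      show "\<mu> j \<noteq> \<mu> n" if "j < n" for j using dist that by simp
    qed
  qed
  then obtain P where P: "\<And>n. degree (P n) = n" "\<And>n. coeff (P n) n = 1"
    "\<And>n. Lop q S T (P n) = smult (\<mu> n) (P n)"
    using choice[of "\<lambda>n P. degree P = n \<and> coeff P n = 1 \<and> Lop q S T P = smult (\<mu> n) P"] by blast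
  have qE: "qEHT q \<sigma>1 \<tau> (lam q t1 (2 * s1) n) (poly (P n))" for n
    unfolding qEHT_def
  proof
    fix y
    have "\<sigma>1 y * qD (1/q) (qD q (poly (P n))) y + \<tau> y * qD q (poly (P n)) y = poly (Lop q S T (P n)) y"
      by (simp add: qD_poly qne Lop_def polyS polyT)
    also have "\<dots> = \<mu> n * poly (P n) y" using P(3) by simp
    finally show "\<sigma>1 y * qD (1/q) (qD q (poly (P n))) y + \<tau> y * qD q (poly (P n)) y
        + lam q t1 (2 * s1) n * poly (P n) y = 0" by (simp add: mu_lam)
  qed
  define x where "x k = (1/q)^k * b2" for k
  have xpos: "x k > 0" for k using q0 b1 by (simp add: x_def)
  have xne: "x k \<noteq> 0" for k using xpos[of k] by simp
  have xmono: "x j \<le> x k" if "j \<le> k" for j k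
  proof -
    have "(1/q)^j \<le> (1/q)^k" using p1 that by (intro power_increasing) auto
    then show ?thesis using b1 by (simp add: x_def)
  qed
  have x0: "x 0 = b2" by (simp add: x_def)
  have xge: "b2 \<le> x k" for k using xmono[of 0 k] x0 by simp
  have xSuc: "x (Suc k) = 1/q * x k" for k by (simp add: x_def)
  have xpred: "q * x k = x (k - 1)" if kp: "k > 0" for k
  proof -
    obtain j where "k = Suc j" using kp by (cases k) auto
    then show ?thesis using q0 by (simp add: xSuc)
  qed
  have xN: "x N = b1"
  proof -
    have e: "- int N - 1 = - int (Suc N)" by simp
    have "q powi (- int N - 1) = (1/q) ^ Suc N"
      unfolding e power_int_minus power_int_of_nat by (simp add: power_one_over inverse_eq_divide)
    then have "(1/q) * x N = (1/q) * b1" using N by (simp add: x_def mult.assoc)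
    then show ?thesis using q0 by simp
  qed
  have xle: "x k \<le> q * b1" if "k < N" for k
  proof -
    have "x (Suc k) \<le> x N" using that by (intro xmono) simp
    then have "1/q * x k \<le> b1" using xN xSuc by simp
    then show ?thesis using q0 by (simp add: field_simps)
  qed
  have xb1: "x k \<le> b1" if "k \<le> N" for k using xmono[OF that] xN by simp
  have xinj: "inj_on x {..N}"
  proof (rule inj_onI)
    fix i j assume "x i = x j"
    then have "(1/q)^i = (1/q)^j" using b1 by (simp add: x_def)
    then show "i = j" using p1 by simp
  qed
  define c where "c = q powi (-3) * (2 * s2) * a2 / ((2 * s1) * (b1 / q))"
  have cs: "c = s2 * a2 / (q^2 * s1 * b1)" using c_simp[OF q0 s1] b1 by (simp add: c_def)
  have c0: "c > 0"
  proof -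
    have e: "c = (s1 * s2 * a2) / (q^2 * (s1 * s1) * b1)" using cs s1 by (simp add: field_simps power2_eq_square)
    have n: "s1 * s2 * a2 > 0" using s12 zeros(1) by (simp add: mult_neg_neg)
    have "s1 * s1 > 0" using s1 by (cases "s1 > 0") (auto intro: mult_pos_pos mult_neg_neg)
    then have d: "q^2 * (s1 * s1) * b1 > 0" using q0 b1 by simp
    show ?thesis unfolding e using n d by (rule divide_pos_pos)
  qed
  define rr where "rr y = qpoch_inf (q * b2 / y) q * qpoch_inf (y / (b1 / q)) q /
      (qpoch_inf (a1 / y) q * qpoch_inf (y / a2) q)" for y
  define W where "W k = (1/q)^k * rr (x k) / c^k" for k
  have rrpos: "rr (x k) > 0" if "k \<le> N" for k
  proof -
    have "q * b2 < 1 * b2" using q1 b1 by (intro mult_strict_right_mono) auto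
    then have "q * b2 < x k" using xge[of k] by linarith
    then have i1: "q * b2 / x k < 1" using xpos[of k] by (simp add: divide_less_eq_1_pos)
    have "b1 < b1 / q" using q0 q1 b1 by (simp add: less_divide_eq)
    then have "x k < b1 / q" using xb1[OF that] by linarith
    moreover have "b1 / q > 0" using b1 q0 by simp
    ultimately have i2: "x k / (b1 / q) < 1" using divide_less_eq_1_pos[of "b1/q" "x k"] by simp
    have "a1 < x k" using xge[of k] zeros by linarith
    then have i3: "a1 / x k < 1" using xpos[of k] by (simp add: divide_less_eq_1_pos)
    have "x k / a2 < 0" using xpos[of k] zeros by (intro divide_pos_neg) auto
    then have i4: "x k / a2 < 1" by linarith
    show ?thesis unfolding rr_def
      using qp_pos'[OF q0 q1 i1] qp_pos'[OF q0 q1 i2] qp_pos'[OF q0 q1 i3] qp_pos'[OF q0 q1 i4]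
      by (intro divide_pos_pos mult_pos_pos)
  qed
  have Wpos: "W k > 0" if "k \<le> N" for k
    unfolding W_def using rrpos[OF that] c0 q0 by (intro divide_pos_pos mult_pos_pos) auto
  define A where "A k = q^2 * \<sigma>1 (x k) / ((1-q)^2 * (x k)^2)" for k
  define B where "B k = sigma2 q \<sigma>1 \<tau> (x k) / ((1-q)^2 * (x k)^2)" for k
  have B0: "B 0 = 0" by (simp add: B_def x0 sig2')
  have AN: "A N = 0" by (simp add: A_def xN sig1')
  have bal: "W k * A k = W (Suc k) * B (Suc k)" if "k < N" for k
  proof -
    have h: "c * rr (x k) * \<sigma>1 (x k) = (1/q) * rr (1/q * x k) * sigma2 q \<sigma>1 \<tau> (1/q * x k)"
      unfolding cs rr_def sig2' sig1' by (rule rr_balance[OF q0 q1 zeros s1 xge[of k] xle[OF that]])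
    show ?thesis unfolding W_def A_def B_def xSuc
      by (rule wbal[OF _ _ xne[of k] _ h]) (use c0 q0 q1 in auto)
  qed
  define U where "U n k = poly (P n) (x k)" for n k
  have Lnode: "\<mu> n * U n k = A k * (U n (Suc k) - U n k) + B k * (U n (k - 1) - U n k)" for n k
  proof -
    have sp: "poly (Lop q S T (P n)) (x k) = (q^2 * \<sigma>1 (x k) * (poly (P n) (1/q * x k) - poly (P n) (x k))
       + (q * (\<sigma>1 (x k) + (1 - 1/q) * x k * \<tau> (x k))) * (poly (P n) (q * x k) - poly (P n) (x k)))
        / ((1 - q)^2 * (x k)^2)"
      using shift_poly[OF q0 q1 xne[of k], of S T "P n"] unfolding polyS polyT .
    have "\<mu> n * U n k = poly (Lop q S T (P n)) (x k)" using P(3) by (simp add: U_def)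
    also have "\<dots> = A k * (U n (Suc k) - U n k) + B k * (poly (P n) (q * x k) - U n k)"
      unfolding sp A_def B_def sigma2_def U_def xSuc by (simp add: add_divide_distrib)
    also have "B k * (poly (P n) (q * x k) - U n k) = B k * (U n (k - 1) - U n k)"
    proof (cases k)
      case 0 then show ?thesis by (simp add: B0)
    next
      case (Suc j) then show ?thesis using xpred[of k] by (simp add: U_def)
    qed
    finally show ?thesis .
  qed
  define G where "G n m = (\<Sum>k\<le>N. W k * U n k * U m k)" for n m
  define Sy where "Sy n m = (\<Sum>k<N. W k * A k * (U n (Suc k) - U n k) * (U m (Suc k) - U m k))" for n m
  have key: "\<mu> n * G n m = - Sy n m" for n m
  proof -
    have "\<mu> n * G n m = (\<Sum>k\<le>N. W k * (\<mu> n * U n k) * U m k)"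
      by (simp add: G_def sum_distrib_left algebra_simps)
    also have "\<dots> = (\<Sum>k\<le>N. W k * (A k * (U n (Suc k) - U n k) + B k * (U n (k - 1) - U n k)) * U m k)"
      by (simp only: Lnode)
    also have "\<dots> = - Sy n m"
      using sym_sum[of B N W A "U n" "U m", OF B0 bal] AN by (simp add: Sy_def)
    finally show ?thesis .
  qed
  have Sysym: "Sy n m = Sy m n" for n m
    unfolding Sy_def by (rule sum.cong) (simp_all add: algebra_simps)
  have Gsym: "G n m = G m n" for n m
    unfolding G_def by (rule sum.cong) (simp_all add: algebra_simps)
  have orth: "G n m = 0" if "n \<noteq> m" for n m
  proof -
    have "\<mu> n * G n m = \<mu> m * G n m" using key[of n m] key[of m n] Sysym[of n m] Gsym[of n m] by simp
    then have "(\<mu> n - \<mu> m) * G n m = 0" by (simp add: algebra_simps)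
    moreover have "\<mu> n - \<mu> m \<noteq> 0" using dist[OF that] by simp
    ultimately show ?thesis by simp
  qed
  have Gpos: "G n n > 0" if "n \<le> N" for n
  proof -
    have "\<exists>k\<le>N. U n k \<noteq> 0"
    proof (rule ccontr)
      assume "\<not> (\<exists>k\<le>N. U n k \<noteq> 0)"
      then have z: "\<And>y. y \<in> x ` {..N} \<Longrightarrow> poly (P n) y = poly 0 y" by (auto simp: U_def)
      have card: "card (x ` {..N}) = Suc N" using card_image[OF xinj] by simp
      have "P n = 0"
        by (rule poly_eqI_degree[OF z]) (use card P(1)[of n] that in auto)
      then show False using P(2)[of n] by simp
    qed
    then obtain k where k: "k \<le> N" "U n k \<noteq> 0" by blast
    show ?thesis unfolding G_def
    proof (rule sum_pos2[of "{..N}" k])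
      have "U n k * U n k > 0" using k(2) by (cases "U n k > 0") (auto intro: mult_pos_pos mult_neg_neg)
      then show "0 < W k * U n k * U n k" using Wpos[OF k(1)] by (simp add: mult.assoc)
      show "0 \<le> W i * U n i * U n i" if "i \<in> {..N}" for i
        using Wpos[of i] that by (simp add: mult.assoc)
    qed (use k in auto)
  qed
  define E where "E = exp (\<iota> * of_real (ln b2))"
  have rho_node: "rho q \<iota> b2 (b1 / q) a1 a2 (x k) = E * of_real (rr (x k) / c^k)" for k
  proof -
    have l: "ln \<bar>x k\<bar> = ln b2 - real k * ln q"
    proof -
      have "ln \<bar>x k\<bar> = ln ((1/q)^k) + ln b2" using xpos[of k] q0 b1 by (simp add: x_def ln_mult)
      also have "ln ((1/q)^k) = real k * ln (1/q)" by (rule ln_realpow)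
      also have "ln (1/q) = - ln q" using q0 by (simp add: ln_div)
      finally show ?thesis by simp
    qed
    have "\<iota> * of_real (ln \<bar>x k\<bar>) = \<iota> * of_real (ln b2) - of_nat k * (\<iota> * of_real (ln q))"
      unfolding l by (simp add: algebra_simps)
    then have "exp (\<iota> * of_real (ln \<bar>x k\<bar>)) = E / exp (\<iota> * of_real (ln q)) ^ k"
      by (simp add: exp_diff exp_of_nat_mult E_def)
    also have "\<dots> = E / (of_real c) ^ k" using iota by (simp add: c_def)
    finally have "exp (\<iota> * of_real (ln \<bar>x k\<bar>)) = E / (of_real c) ^ k" .
    then show ?thesis unfolding rho_def rr_def[symmetric]
      by (simp add: of_real_divide)
  qed
  define K where "K = (of_real ((1/q - 1) * b2) :: complex) * E"
  have jack: "jackson_int q b2 N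
      (\<lambda>y. of_real (poly (P n) y * poly (P m) y) * rho q \<iota> b2 (b1 / q) a1 a2 y) = K * of_real (G n m)" for n m
  proof -
    have "jackson_int q b2 N (\<lambda>y. of_real (poly (P n) y * poly (P m) y) * rho q \<iota> b2 (b1 / q) a1 a2 y)
      = of_real ((1/q - 1) * b2) * (\<Sum>k\<le>N. of_real ((1/q)^k) * (of_real (U n k * U m k) * (E * of_real (rr (x k) / c^k))))"
      unfolding jackson_int_def x_def[symmetric] rho_node U_def ..
    also have "(\<Sum>k\<le>N. of_real ((1/q)^k) * (of_real (U n k * U m k) * (E * of_real (rr (x k) / c^k))))
        = (\<Sum>k\<le>N. E * of_real (W k * U n k * U m k))"
      by (rule sum.cong) (simp_all add: W_def algebra_simps)
    also have "\<dots> = E * of_real (G n m)" by (simp add: G_def sum_distrib_left)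
    finally show ?thesis by (simp add: K_def)
  qed
  have K0: "K \<noteq> 0"
  proof -
    have "(1/q - 1) * b2 \<noteq> 0" using p1 b1 qne by simp
    then show ?thesis by (simp add: K_def E_def)
  qed
  show ?thesis
  proof (intro exI conjI allI impI)
    show "degree (P n) = n" for n by (rule P(1))
    show "qEHT q \<sigma>1 \<tau> (lam q t1 (2 * s1) n) (poly (P n))" for n by (rule qE)
    show "K * of_real (G n n) \<noteq> 0" if "n \<le> N" for n using K0 Gpos[OF that] by simp
    show "jackson_int q b2 N (\<lambda>x. of_real (poly (P n) x * poly (P m) x) * rho q \<iota> b2 (b1 / q) a1 a2 x)
        = (if m = n then K * of_real (G n n) else 0)" for m n
      unfolding jack using orth[of n m] by auto
  qed
qed

end
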